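(* Let $\mathcal{F}=\widetilde{M}$ be an indecomposable coherent sheaf on $\mathbb{A}^1=\operatorname{MSpec}(\langle t\rangle)$, and let $U=\operatorname{MSpec}(\langle t,t^{-1}\rangle)\subset\mathbb{A}^1$ be the open subset where $t$ is invertible. Then: (1) if $\Gamma_M$ is of type 1, $\mathcal{F}|_U\cong 0$; (2) if $\Gamma_M$ is of type 2, $\mathcal{F}|_U\cong\mathcal{L}$; (3) if $\Gamma_M$ is of type 3 with oriented cycle of length $k$, $\mathcal{F}|_U\cong\mathcal{C}_k$.
   Context: $\langle t\rangle=\{0,1,t,t^2,\dots\}$ and $\langle t,t^{-1}\rangle=\{0\}\cup\{t^n:n\in\mathbb Z\}$. A module over such a monoid is a pointed set $(M,* )$ with an action satisfying $1m=m$, $a(bm)=(ab)m$, $0m=*$. Coherent sheaves on $\mathbb A^1$ are $\widetilde M$ with $M$ a finitely generated $\langle t\rangle$-module, and the restriction of $\widetilde M$ to $U$ is $\widetilde{M_t}$, where $M_t$ is the localization at powers of $t$. $\mathcal F$ indecomposable means non-zero and not a direct sum (wedge sum) of two non-zero coherent sheaves. The graph $\Gamma_M$ has vertex set $M\setminus\{*\}$ and an edge $m\to tm$ whenever $tm\ne *$. $\Gamma_M$ is of type 1 if it is a rooted tree (underlying undirected graph a tree with a unique root, i.e. vertex without outgoing edge, reached by a directed path from every vertex); of type 2 if obtained from a finite rooted tree by joining its root to the initial vertex of an infinite directed ray $v_0\to v_1\to\cdots$; of type 3 if obtained from an oriented directed cycle by attaching rooted trees to it. $\mathcal{L}=\widetilde{\langle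 t,t^{-1}\rangle}$ and $\mathcal{C}_k=\widetilde{C_k}$ where $C_k=\{*,1,t,\dots,t^{k-1}\}$ with $t$ acting by the cyclic permutation $1\mapsto t\mapsto\cdots\mapsto t^{k-1}\mapsto1$. *)

theory Defs
  imports Main
begin

(* A module over the monoid <t> = {0,1,t,t^2,...}: a pointed set (M,z) with the
   action of t given by an endomorphism T (then t^n acts as T^^n and 0 acts as
   the constant z; the axioms force T z = z). *)
definition tmod :: "'a set \<Rightarrow> 'a \<Rightarrow> ('a \<Rightarrow> 'a) \<Rightarrow> bool" where
  "tmod M z T \<longleftrightarrow> z \<in> M \<and> (\<forall>m\<in>M. T m \<in> M) \<and> T z = z"

definition fin_gen :: "'a set \<Rightarrow> 'a \<Rightarrow> ('a \<Rightarrow> 'a) \<Rightarrow> bool" where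
  "fin_gen M z T \<longleftrightarrow> (\<exists>S. finite S \<and> S \<subseteq> M \<and>
      (\<forall>m\<in>M. m = z \<or> (\<exists>s\<in>S. \<exists>n. (T ^^ n) s = m)))"

definition submod :: "'a set \<Rightarrow> 'a set \<Rightarrow> 'a \<Rightarrow> ('a \<Rightarrow> 'a) \<Rightarrow> bool" where
  "submod N M z T \<longleftrightarrow> z \<in> N \<and> N \<subseteq> M \<and> (\<forall>n\<in>N. T n \<in> N)"

definition indecomposable :: "'a set \<Rightarrow> 'a \<Rightarrow> ('a \<Rightarrow> 'a) \<Rightarrow> bool" where
  "indecomposable M z T \<longleftrightarrow> M \<noteq> {z} \<and>
     \<not> (\<exists>N P. submod N M z T \<and> submod P M z T \<and> N \<inter> P = {z} \<and> N \<union> P = M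
              \<and> N \<noteq> {z} \<and> P \<noteq> {z})"

(* Graph with vertex set S and an edge v -> T v whenever T v \<in> S.
   (For S = M - {z} this is exactly Gamma_M.) *)
definition uadj :: "'a set \<Rightarrow> ('a \<Rightarrow> 'a) \<Rightarrow> 'a \<Rightarrow> 'a \<Rightarrow> bool" where
  "uadj S T u v \<longleftrightarrow> u \<in> S \<and> v \<in> S \<and> (v = T u \<or> u = T v)"

(* underlying undirected (multi)graph is a tree: connected, no loops,
   no parallel edges, no simple cycles of length \<ge> 3 *)
definition undirected_tree :: "'a set \<Rightarrow> ('a \<Rightarrow> 'a) \<Rightarrow> bool" where
  "undirected_tree S T \<longleftrightarrow>
     (\<forall>u\<in>S. \<forall>v\<in>S. (uadj S T)\<^sup>*\<^sup>* u v) \<and>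
     (\<forall>v\<in>S. T v \<noteq> v) \<and>
     (\<forall>u\<in>S. \<forall>v\<in>S. u \<noteq> v \<and> T u = v \<longrightarrow> T v \<noteq> u) \<and>
     \<not> (\<exists>xs. 3 \<le> length xs \<and> distinct xs \<and> set xs \<subseteq> S \<and>
            (\<forall>i<length xs. uadj S T (xs ! i) (xs ! ((i + 1) mod length xs))))"

definition rooted_tree :: "'a set \<Rightarrow> ('a \<Rightarrow> 'a) \<Rightarrow> bool" where
  "rooted_tree S T \<longleftrightarrow> undirected_tree S T \<and>
     (\<exists>!r. r \<in> S \<and> T r \<notin> S) \<and>
     (\<forall>v\<in>S. \<forall>r\<in>S. T r \<notin> S \<longrightarrow>
         (\<exists>n. (\<forall>i\<le>n. (T ^^ i) v \<in> S) \<and> (T ^^ n) v = r))"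

definition gamma_type1 :: "'a set \<Rightarrow> 'a \<Rightarrow> ('a \<Rightarrow> 'a) \<Rightarrow> bool" where
  "gamma_type1 M z T \<longleftrightarrow> rooted_tree (M - {z}) T"

(* finite rooted tree Tr whose root is joined to the initial vertex v0 of an
   infinite directed ray v0 -> T v0 -> T^2 v0 -> ... *)
definition gamma_type2 :: "'a set \<Rightarrow> 'a \<Rightarrow> ('a \<Rightarrow> 'a) \<Rightarrow> bool" where
  "gamma_type2 M z T \<longleftrightarrow> (\<exists>Tr v0.
     finite Tr \<and> rooted_tree Tr T \<and>
     (\<forall>i j. (T ^^ i) v0 = (T ^^ j) v0 \<longrightarrow> i = j) \<and>
     Tr \<inter> range (\<lambda>i. (T ^^ i) v0) = {} \<and>
     M - {z} = Tr \<union> range (\<lambda>i. (T ^^ i) v0) \<and>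
     (\<forall>r\<in>Tr. T r \<notin> Tr \<longrightarrow> T r = v0))"

definition gamma_type3 :: "'a set \<Rightarrow> 'a \<Rightarrow> ('a \<Rightarrow> 'a) \<Rightarrow> nat \<Rightarrow> bool" where
  "gamma_type3 M z T k \<longleftrightarrow> (\<exists>c. c \<in> M - {z} \<and> 1 \<le> k \<and> (T ^^ k) c = c \<and>
     inj_on (\<lambda>i. (T ^^ i) c) {..<k} \<and>
     (\<forall>v\<in>M - {z}. \<exists>n. (T ^^ n) v \<in> (\<lambda>i. (T ^^ i) c) ` {..<k}))"

(* Localization M_t: pairs (m,a) standing for m/t^a *)
definition loc_rel :: "'a set \<Rightarrow> ('a \<Rightarrow> 'a) \<Rightarrow> (('a \<times> nat) \<times> ('a \<times> nat)) set" where
  "loc_rel M T = {((m, a), (m', b)). m \<in> M \<and> m' \<in> M \<and>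
      (\<exists>j. (T ^^ (j + b)) m = (T ^^ (j + a)) m')}"

definition loc_carrier :: "'a set \<Rightarrow> ('a \<Rightarrow> 'a) \<Rightarrow> ('a \<times> nat) set set" where
  "loc_carrier M T = (M \<times> UNIV) // loc_rel M T"

definition loc_pt :: "'a set \<Rightarrow> ('a \<Rightarrow> 'a) \<Rightarrow> 'a \<Rightarrow> ('a \<times> nat) set" where
  "loc_pt M T z = loc_rel M T `` {(z, 0)}"

definition loc_act :: "'a set \<Rightarrow> ('a \<Rightarrow> 'a) \<Rightarrow> ('a \<times> nat) set \<Rightarrow> ('a \<times> nat) set" where
  "loc_act M T X = loc_rel M T `` ((\<lambda>(m, a). (T m, a)) ` X)"

(* isomorphism of <t,t^-1>-modules (pointed bijection commuting with t;
   commuting with t^-1 then follows) *)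
definition mod_iso :: "'a set \<Rightarrow> 'a \<Rightarrow> ('a \<Rightarrow> 'a) \<Rightarrow> 'b set \<Rightarrow> 'b \<Rightarrow> ('b \<Rightarrow> 'b) \<Rightarrow> bool" where
  "mod_iso M z T N w S \<longleftrightarrow> (\<exists>f. bij_betw f M N \<and> f z = w \<and> (\<forall>x\<in>M. f (T x) = S (f x)))"

(* F|_U as a <t,t^-1>-module is M_t *)
definition restr_iso :: "'a set \<Rightarrow> 'a \<Rightarrow> ('a \<Rightarrow> 'a) \<Rightarrow> 'b set \<Rightarrow> 'b \<Rightarrow> ('b \<Rightarrow> 'b) \<Rightarrow> bool" where
  "restr_iso M z T N w S \<longleftrightarrow> mod_iso (loc_carrier M T) (loc_pt M T z) (loc_act M T) N w S"

(* <t,t^-1> itself: None = 0, Some n = t^n *)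
definition L_carrier :: "int option set" where "L_carrier = UNIV"
definition L_act :: "int option \<Rightarrow> int option" where "L_act = map_option (\<lambda>n. n + 1)"

(* C_k: None = *, Some i = t^i, i < k, cyclic action *)
definition C_carrier :: "nat \<Rightarrow> nat option set" where
  "C_carrier k = insert None (Some ` {..<k})"
definition C_act :: "nat \<Rightarrow> nat option \<Rightarrow> nat option" where
  "C_act k = map_option (\<lambda>i. (i + 1) mod k)"

end

theory Submission
  imports Defs
begin


lemma fp_add: "(T ^^ a) ((T ^^ b) x) = (T ^^ (a + b)) x"
  by (simp add: funpow_add)

lemma restr_iso_by_kernel:
  assumes ker: "\<And>m a m' b. m \<in> M \<Longrightarrow> m' \<in> M \<Longrightarrow> ((m,a),(m',b)) \<in> loc_rel M T \<longleftrightarrow> h (m,a) = h (m',b)"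
  and img: "h ` (M \<times> UNIV) = N" and zM: "z \<in> M" and pt: "h (z,0) = w"
  and TM: "\<And>m. m \<in> M \<Longrightarrow> T m \<in> M"
  and act: "\<And>m a. m \<in> M \<Longrightarrow> h (T m, a) = S (h (m,a))"
  shows "restr_iso M z T N w S"
proof -
  have sub: "loc_rel M T \<subseteq> (M \<times> UNIV) \<times> (M \<times> UNIV)" unfolding loc_rel_def by auto
  have cls: "loc_rel M T `` {p} = {q \<in> M \<times> UNIV. h q = h p}" if pM: "p \<in> M \<times> UNIV" for p
  proof -
    obtain m a where p: "p = (m,a)" "m \<in> M" using pM by auto
    show ?thesis using sub ker p by fastforce
  qed
  define f where "f X = h (SOME p. p \<in> X)" for X
  have fcls: "f (loc_rel M T `` {p}) = h p" if "p \<in> M \<times> UNIV" for p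
  proof -
    have "p \<in> loc_rel M T `` {p}" using cls[OF that] that by auto
    then have "(SOME q. q \<in> loc_rel M T `` {p}) \<in> loc_rel M T `` {p}" by (rule someI)
    then show ?thesis unfolding f_def using cls[OF that] by auto
  qed
  have bij: "bij_betw f (loc_carrier M T) N"
    unfolding bij_betw_def
  proof
    show "inj_on f (loc_carrier M T)"
    proof (rule inj_onI)
      fix X Y assume X: "X \<in> loc_carrier M T" and Y: "Y \<in> loc_carrier M T" and e: "f X = f Y"
      from X obtain p where p: "X = loc_rel M T `` {p}" "p \<in> M \<times> UNIV"
        unfolding loc_carrier_def by (auto elim: quotientE)
      from Y obtain q where q: "Y = loc_rel M T `` {q}" "q \<in> M \<times> UNIV"
        unfolding loc_carrier_def by (auto elim: quotientE)
      show "X = Y" using e p q fcls cls by simp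
    qed
    show "f ` loc_carrier M T = N"
    proof
      show "f ` loc_carrier M T \<subseteq> N" using img fcls
        unfolding loc_carrier_def by (auto elim!: quotientE)
      show "N \<subseteq> f ` loc_carrier M T"
      proof
        fix y assume "y \<in> N"
        then obtain p where p: "p \<in> M \<times> UNIV" "y = h p" using img by auto
        have "loc_rel M T `` {p} \<in> loc_carrier M T" unfolding loc_carrier_def using p(1) by (rule quotientI)
        then show "y \<in> f ` loc_carrier M T" using fcls[OF p(1)] p(2) by (metis image_eqI)
      qed
    qed
  qed
  have ptf: "f (loc_pt M T z) = w" unfolding loc_pt_def using fcls[of "(z,0)"] zM pt by simp
  have actf: "f (loc_act M T X) = S (f X)" if "X \<in> loc_carrier M T" for X
  proof -
    from that obtain m a where p: "X = loc_rel M T `` {(m,a)}" "m \<in> M"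
      unfolding loc_carrier_def by (auto elim: quotientE)
    have "loc_act M T X = loc_rel M T `` {(T m, a)}"
    proof -
      have "(\<lambda>(m, a). (T m, a)) ` X = {(T m', b) | m' b. m' \<in> M \<and> h (m',b) = h (m,a)}"
        using p cls[of "(m,a)"] by auto
      then have "loc_act M T X = \<Union> {loc_rel M T `` {(T m', b)} | m' b. m' \<in> M \<and> h (m',b) = h (m,a)}"
        unfolding loc_act_def by auto
      also have "\<dots> = loc_rel M T `` {(T m, a)}"
      proof -
        have "loc_rel M T `` {(T m', b)} = loc_rel M T `` {(T m, a)}" if "m' \<in> M" "h (m',b) = h (m,a)" for m' b
          using cls[of "(T m', b)"] cls[of "(T m, a)"] TM that p act by auto
        then show ?thesis using p by blast
      qed
      finally show ?thesis .
    qed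
    then show ?thesis using fcls p TM act by simp
  qed
  show ?thesis unfolding restr_iso_def mod_iso_def using bij ptf actf by blast
qed

lemma tmod_pow: "tmod M z T \<Longrightarrow> m \<in> M \<Longrightarrow> (T ^^ n) m \<in> M"
  by (induction n) (auto simp: tmod_def)

lemma tmod_powz: "tmod M z T \<Longrightarrow> (T ^^ n) z = z"
  by (induction n) (auto simp: tmod_def)

lemma pow_after: "(T ^^ N) m = z \<Longrightarrow> T z = z \<Longrightarrow> N \<le> n \<Longrightarrow> (T ^^ n) m = z"
proof -
  assume a: "(T ^^ N) m = z" "T z = z" "N \<le> n"
  have "\<And>k. (T ^^ k) z = z" using a(2) by (induct_tac k) auto
  moreover have "(T ^^ n) m = (T ^^ (n - N)) ((T ^^ N) m)" using a(3) by (simp add: fp_add)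
  ultimately show ?thesis using a(1) by simp
qed

lemma type1_case:
  assumes tm: "tmod M z T" and g: "gamma_type1 M z T"
  shows "restr_iso M z T {()} () id"
proof -
  have Tz: "T z = z" and zM: "z \<in> M" using tm by (auto simp: tmod_def)
  have nil: "\<exists>N. (T ^^ N) m = z" if "m \<in> M" for m
  proof (cases "m = z")
    case True then show ?thesis by (intro exI[of _ 0]) simp
  next
    case False
    from g obtain r where r: "r \<in> M - {z}" "T r \<notin> M - {z}"
      unfolding gamma_type1_def rooted_tree_def by blast
    then have Tr: "T r = z" using tm by (auto simp: tmod_def)
    from g r that False obtain n where "(T ^^ n) m = r"
      unfolding gamma_type1_def rooted_tree_def by blast
    then have "(T ^^ Suc n) m = z" using Tr by simp
    then show ?thesis by blast
  qed
  show ?thesis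
  proof (rule restr_iso_by_kernel[where h = "\<lambda>_. ()"])
    fix m a m' b assume m: "m \<in> M" and m': "m' \<in> M"
    obtain N where N: "(T ^^ N) m = z" using nil m by blast
    obtain N' where N': "(T ^^ N') m' = z" using nil m' by blast
    have "(T ^^ (N + N' + b)) m = (T ^^ (N + N' + a)) m'"
      using pow_after[OF N Tz] pow_after[OF N' Tz] by simp
    then show "(((m, a), m', b) \<in> loc_rel M T) = (() = ())"
      unfolding loc_rel_def using m m' by auto
  qed (use tm zM in \<open>auto simp: tmod_def\<close>)
qed

lemma shift: fixes T :: "'a \<Rightarrow> 'a" shows "(T ^^ p) m = (T ^^ q) v \<Longrightarrow> (T ^^ (p + x)) m = (T ^^ (q + x)) v"
proof -
  assume e: "(T ^^ p) m = (T ^^ q) v"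
  have "(T ^^ (p + x)) m = (T ^^ x) ((T ^^ p) m)" by (simp only: add.commute[of p x] funpow_add comp_apply)
  also have "\<dots> = (T ^^ x) ((T ^^ q) v)" using e by simp
  also have "\<dots> = (T ^^ (q + x)) v" by (simp only: add.commute[of q x] funpow_add comp_apply)
  finally show ?thesis .
qed

lemma apply_pow: "X = Y \<Longrightarrow> (T ^^ k) X = (T ^^ k) Y" by simp

lemma type2_case:
  assumes tm: "tmod M z T" and g: "gamma_type2 M z T"
  shows "restr_iso M z T L_carrier None L_act"
proof -
  have Tz: "T z = z" and zM: "z \<in> M" using tm by (auto simp: tmod_def)
  from g obtain Tr v0 where fin: "finite Tr" and rt: "rooted_tree Tr T"
    and inj0: "\<forall>i j. (T ^^ i) v0 = (T ^^ j) v0 \<longrightarrow> i = j"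
    and dis: "Tr \<inter> range (\<lambda>i. (T ^^ i) v0) = {}"
    and Mz: "M - {z} = Tr \<union> range (\<lambda>i. (T ^^ i) v0)"
    and rootv0: "\<forall>r\<in>Tr. T r \<notin> Tr \<longrightarrow> T r = v0"
    unfolding gamma_type2_def by (elim exE conjE)
  have inj: "\<And>i j. (T ^^ i) v0 = (T ^^ j) v0 \<Longrightarrow> i = j" using inj0 by blast
  have rootv: "\<And>r. r \<in> Tr \<Longrightarrow> T r \<notin> Tr \<Longrightarrow> T r = v0" using rootv0 by blast
  have Rin0: "(T ^^ i) v0 \<in> M - {z}" for i unfolding Mz by (rule UnI2) (rule rangeI)
  have Rin: "(T ^^ i) v0 \<in> M" "(T ^^ i) v0 \<noteq> z" for i using Rin0[of i] by auto
  have reach: "\<exists>p q. (T ^^ p) m = (T ^^ q) v0" if "m \<in> M" "m \<noteq> z" for m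
  proof -
    have "m \<in> Tr \<union> range (\<lambda>i. (T ^^ i) v0)" using that Mz by blast
    then show ?thesis
    proof
      assume mT: "m \<in> Tr"
      from rt obtain r where r: "r \<in> Tr" "T r \<notin> Tr" unfolding rooted_tree_def by blast
      from rt r mT obtain n where "(T ^^ n) m = r" unfolding rooted_tree_def by blast
      then have "(T ^^ Suc n) m = (T ^^ 0) v0" using rootv[OF r] by simp
      then show ?thesis by blast
    next
      assume "m \<in> range (\<lambda>i. (T ^^ i) v0)"
      then obtain i where "m = (T ^^ i) v0" by blast
      then have "(T ^^ 0) m = (T ^^ i) v0" by simp
      then show ?thesis by blast
    qed
  qed
  have nz: "(T ^^ n) m \<noteq> z" if mM: "m \<in> M" "m \<noteq> z" for m n
  proof
    assume e: "(T ^^ n) m = z"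
    obtain p q where pq: "(T ^^ p) m = (T ^^ q) v0" using reach mM by blast
    have "(T ^^ (n + p)) m = z" by (rule pow_after[OF e Tz]) simp
    moreover have "(T ^^ (p + n)) m = (T ^^ (q + n)) v0" using shift[OF pq] .
    ultimately show False using Rin(2)[of "q + n"] by (metis add.commute)
  qed
  define ht where "ht m = (SOME d::int. \<exists>p q. (T ^^ p) m = (T ^^ q) v0 \<and> d = int q - int p)" for m
  have ht_eq: "ht m = int q - int p" if pq: "(T ^^ p) m = (T ^^ q) v0" for m p q
  proof -
    have "\<exists>d::int. \<exists>p q. (T ^^ p) m = (T ^^ q) v0 \<and> d = int q - int p" using pq by blast
    then have "\<exists>p q. (T ^^ p) m = (T ^^ q) v0 \<and> ht m = int q - int p"
      unfolding ht_def by (rule someI_ex)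
    then obtain p' q' where pq': "(T ^^ p') m = (T ^^ q') v0" "ht m = int q' - int p'" by blast
    have "(T ^^ (p + p')) m = (T ^^ (q + p')) v0" using shift[OF pq] .
    moreover have "(T ^^ (p' + p)) m = (T ^^ (q' + p)) v0" using shift[OF pq'(1)] .
    ultimately have "(T ^^ (q + p')) v0 = (T ^^ (q' + p)) v0" by (metis add.commute)
    then have "q + p' = q' + p" by (rule inj)
    then have "int q + int p' = int q' + int p" by (metis of_nat_add)
    then show ?thesis using pq'(2) by linarith
  qed
  define h where "h = (\<lambda>(m, a). if m = z then None else Some (ht m - int (a::nat)))"
  show ?thesis
  proof (rule restr_iso_by_kernel[where h = h])
    fix m a m' b assume m: "m \<in> M" and m': "m' \<in> M"
    have lr: "(((m, a), m', b) \<in> loc_rel M T) = (\<exists>j. (T ^^ (j + b)) m = (T ^^ (j + a)) m')"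
      unfolding loc_rel_def using m m' by simp
    show "(((m, a), m', b) \<in> loc_rel M T) = (h (m, a) = h (m', b))"
    proof (cases "m = z")
      case True
      note mz = True
      show ?thesis
      proof (cases "m' = z")
        case True
        have "(T ^^ (0 + b)) m = (T ^^ (0 + a)) m'" using mz True tmod_powz[OF tm] by simp
        then have "\<exists>j. (T ^^ (j + b)) m = (T ^^ (j + a)) m'" by blast
        then show ?thesis unfolding lr using mz True unfolding h_def by simp
      next
        case False
        have "\<not> (\<exists>j. (T ^^ (j + b)) m = (T ^^ (j + a)) m')"
        proof
          assume "\<exists>j. (T ^^ (j + b)) m = (T ^^ (j + a)) m'"
          then obtain j where "(T ^^ (j + b)) m = (T ^^ (j + a)) m'" by blast
          then have "z = (T ^^ (j + a)) m'" using mz tmod_powz[OF tm] by simp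
          then show False using nz[OF m' False, of "j + a"] by simp
        qed
        then show ?thesis unfolding lr using mz False unfolding h_def by simp
      qed
    next
      case False
      note mnz = False
      show ?thesis
      proof (cases "m' = z")
        case True
        have "\<not> (\<exists>j. (T ^^ (j + b)) m = (T ^^ (j + a)) m')"
        proof
          assume "\<exists>j. (T ^^ (j + b)) m = (T ^^ (j + a)) m'"
          then obtain j where "(T ^^ (j + b)) m = (T ^^ (j + a)) m'" by blast
          then have "(T ^^ (j + b)) m = z" using True tmod_powz[OF tm] by simp
          then show False using nz[OF m mnz, of "j + b"] by simp
        qed
        then show ?thesis unfolding lr using mnz True unfolding h_def by simp
      next
        case False
        obtain p q where pq: "(T ^^ p) m = (T ^^ q) v0" using reach m mnz by blast
        obtain p' q' where pq': "(T ^^ p') m' = (T ^^ q') v0" using reach m' False by blast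
        have hh: "h (m, a) = h (m', b) \<longleftrightarrow> int q - int p - int a = int q' - int p' - int b"
          using ht_eq[OF pq] ht_eq[OF pq'] mnz False unfolding h_def by simp
        have "(\<exists>j. (T ^^ (j + b)) m = (T ^^ (j + a)) m') \<longleftrightarrow> q + p' + b = q' + p + a"
        proof
          assume "\<exists>j. (T ^^ (j + b)) m = (T ^^ (j + a)) m'"
          then obtain j where j: "(T ^^ (j + b)) m = (T ^^ (j + a)) m'" by blast
          have "(T ^^ (p' + j + b)) ((T ^^ p) m) = (T ^^ (p + j + a)) ((T ^^ p') m')"
          proof -
            have "(T ^^ (p' + j + b)) ((T ^^ p) m) = (T ^^ (p + p')) ((T ^^ (j + b)) m)"
              by (simp add: fp_add ac_simps)
            also have "\<dots> = (T ^^ (p + p')) ((T ^^ (j + a)) m')" using j by simp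
            also have "\<dots> = (T ^^ (p + j + a)) ((T ^^ p') m')"
              by (simp add: fp_add ac_simps)
            finally show ?thesis .
          qed
          then have "(T ^^ (p' + j + b)) ((T ^^ q) v0) = (T ^^ (p + j + a)) ((T ^^ q') v0)"
            using pq pq' by simp
          then have "(T ^^ (p' + j + b + q)) v0 = (T ^^ (p + j + a + q')) v0" by (simp add: fp_add)
          then have "p' + j + b + q = p + j + a + q'" by (rule inj)
          then show "q + p' + b = q' + p + a" by simp
        next
          assume e: "q + p' + b = q' + p + a"
          have "(T ^^ ((p + p') + b)) m = (T ^^ (p' + b)) ((T ^^ p) m)" by (simp add: fp_add ac_simps)
          also have "\<dots> = (T ^^ (p' + b + q)) v0" using pq by (simp add: fp_add)
          also have "\<dots> = (T ^^ (p + a + q')) v0" using e by (simp add: ac_simps)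
          also have "\<dots> = (T ^^ (p + a)) ((T ^^ p') m')" using pq' by (simp add: fp_add)
          also have "\<dots> = (T ^^ ((p + p') + a)) m'" by (simp add: fp_add ac_simps)
          finally show "\<exists>j. (T ^^ (j + b)) m = (T ^^ (j + a)) m'" by blast
        qed
        moreover have "(q + p' + b = q' + p + a) \<longleftrightarrow> (int q - int p - int a = int q' - int p' - int b)"
          by linarith
        ultimately show ?thesis unfolding lr hh by simp
      qed
    qed
  next
    show "h ` (M \<times> UNIV) = L_carrier"
    proof -
      have "y \<in> h ` (M \<times> UNIV)" for y
      proof (cases y)
        case None
        then show ?thesis using zM unfolding h_def by (auto intro!: image_eqI[of _ _ "(z, 0)"])
      next
        case (Some d)
        show ?thesis
        proof (cases "d \<ge> 0")
          case True
          have e0: "(T ^^ 0) ((T ^^ nat d) v0) = (T ^^ nat d) v0" by simp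
          have "ht ((T ^^ nat d) v0) = d" using ht_eq[OF e0] True by simp
          then have "h ((T ^^ nat d) v0, 0) = y" using Some Rin unfolding h_def by simp
          then show ?thesis by (rule image_eqI[OF sym]) (simp add: Rin)
        next
          case False
          have e0: "(T ^^ 0) v0 = (T ^^ 0) v0" by simp
          have "ht v0 = 0" using ht_eq[OF e0] by simp
          moreover have "v0 \<noteq> z" "v0 \<in> M" using Rin[of 0] by auto
          ultimately have "h (v0, nat (-d)) = y" using Some False unfolding h_def by simp
          then show ?thesis by (rule image_eqI[OF sym]) (simp add: \<open>v0 \<in> M\<close>)
        qed
      qed
      then show ?thesis unfolding L_carrier_def by blast
    qed
  next
    show "z \<in> M" by (rule zM)
    show "h (z, 0) = None" unfolding h_def by simp
    show "T m \<in> M" if "m \<in> M" for m using that tm by (auto simp: tmod_def)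
  next
    fix m a assume m: "m \<in> M"
    show "h (T m, a) = L_act (h (m, a))"
    proof (cases "m = z")
      case True then show ?thesis using Tz unfolding h_def L_act_def by simp
    next
      case False
      obtain p q where pq: "(T ^^ p) m = (T ^^ q) v0" using reach m False by blast
      have "(T ^^ (p + 1)) m = (T ^^ (q + 1)) v0" using shift[OF pq] .
      then have "(T ^^ p) (T m) = (T ^^ (q + 1)) v0" by (simp add: funpow_Suc_right del: funpow.simps)
      then have "ht (T m) = int (q + 1) - int p" by (rule ht_eq)
      moreover have "T m \<noteq> z" using nz[OF m False, of 1] by simp
      ultimately show ?thesis using ht_eq[OF pq] False unfolding h_def L_act_def by simp
    qed
  qed
qed



lemma modk: "(x::nat) mod k = y mod k \<longleftrightarrow> int k dvd int x - int y"
proof -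
  have "x mod k = y mod k \<longleftrightarrow> int (x mod k) = int (y mod k)" by simp
  also have "\<dots> \<longleftrightarrow> int x mod int k = int y mod int k" by (simp only: zmod_int)
  also have "\<dots> \<longleftrightarrow> int k dvd int x - int y" by (rule mod_eq_dvd_iff)
  finally show ?thesis .
qed

lemma type3_case:
  assumes tm: "tmod M z T" and g: "gamma_type3 M z T k"
  shows "restr_iso M z T (C_carrier k) None (C_act k)"
proof -
  have Tz: "T z = z" and zM: "z \<in> M" using tm by (auto simp: tmod_def)
  from g obtain c where cM: "c \<in> M - {z}" and k1: "1 \<le> k" and ck: "(T ^^ k) c = c"
    and inj: "inj_on (\<lambda>i. (T ^^ i) c) {..<k}"
    and reach0: "\<forall>v\<in>M - {z}. \<exists>n. (T ^^ n) v \<in> (\<lambda>i. (T ^^ i) c) ` {..<k}"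
    unfolding gamma_type3_def by (elim exE conjE)
  have kmul: "(T ^^ (k * d)) c = c" for d
  proof (induction d)
    case 0 then show ?case by simp
  next
    case (Suc d)
    have "(T ^^ (k * Suc d)) c = (T ^^ (k * d)) ((T ^^ k) c)" by (simp add: fp_add add.commute)
    then show ?case using Suc ck by simp
  qed
  have per: "(T ^^ x) c = (T ^^ (x mod k)) c" for x
  proof -
    have "(T ^^ x) c = (T ^^ (x mod k + k * (x div k))) c" by simp
    also have "\<dots> = (T ^^ (x mod k)) ((T ^^ (k * (x div k))) c)" by (simp add: fp_add)
    finally show ?thesis using kmul by simp
  qed
  have cyc: "(T ^^ x) c = (T ^^ y) c \<longleftrightarrow> x mod k = y mod k" for x y
  proof
    assume "(T ^^ x) c = (T ^^ y) c"
    then have "(T ^^ (x mod k)) c = (T ^^ (y mod k)) c" using per by metis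
    moreover have "x mod k \<in> {..<k}" "y mod k \<in> {..<k}" using k1 by auto
    ultimately show "x mod k = y mod k" using inj unfolding inj_on_def by blast
  next
    assume "x mod k = y mod k" then show "(T ^^ x) c = (T ^^ y) c" using per by metis
  qed
  have reach: "\<exists>p i. (T ^^ p) m = (T ^^ i) c" if "m \<in> M" "m \<noteq> z" for m
    using reach0 that by blast
  have nzc: "(T ^^ i) c \<noteq> z" for i
  proof
    assume e: "(T ^^ i) c = z"
    have le: "i \<le> k * (i + 1)" using k1 by (simp add: add_mult_distrib2 trans_le_add2)
    have "(T ^^ (k * (i + 1))) c = z" by (rule pow_after[OF e Tz le])
    then show False using kmul[of "i + 1"] cM by simp
  qed
  have nz: "(T ^^ n) m \<noteq> z" if mM: "m \<in> M" "m \<noteq> z" for m n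
  proof
    assume e: "(T ^^ n) m = z"
    obtain p q where pq: "(T ^^ p) m = (T ^^ q) c" using reach mM by blast
    have "(T ^^ (n + p)) m = z" by (rule pow_after[OF e Tz]) simp
    moreover have "(T ^^ (p + n)) m = (T ^^ (q + n)) c" using shift[OF pq] .
    ultimately show False using nzc[of "q + n"] by (metis add.commute)
  qed
  define gg where "gg m = (SOME d::int. \<exists>p q. (T ^^ p) m = (T ^^ q) c \<and> d = int q - int p)" for m
  have g_eq: "int k dvd gg m - (int q - int p)" if pq: "(T ^^ p) m = (T ^^ q) c" for m p q
  proof -
    have "\<exists>d::int. \<exists>p q. (T ^^ p) m = (T ^^ q) c \<and> d = int q - int p" using pq by blast
    then have "\<exists>p q. (T ^^ p) m = (T ^^ q) c \<and> gg m = int q - int p"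
      unfolding gg_def by (rule someI_ex)
    then obtain p' q' where pq': "(T ^^ p') m = (T ^^ q') c" "gg m = int q' - int p'" by blast
    have "(T ^^ (p + p')) m = (T ^^ (q + p')) c" using shift[OF pq] .
    moreover have "(T ^^ (p' + p)) m = (T ^^ (q' + p)) c" using shift[OF pq'(1)] .
    ultimately have "(T ^^ (q' + p)) c = (T ^^ (q + p')) c" by (metis add.commute)
    then have dv: "int k dvd int (q' + p) - int (q + p')" using cyc modk by metis
    have eq: "gg m - (int q - int p) = int (q' + p) - int (q + p')" using pq'(2) by simp
    show ?thesis unfolding eq by (rule dv)
  qed
  define h where "h = (\<lambda>(m, a). if m = z then None else Some (nat ((gg m - int (a::nat)) mod int k)))"
  have kpos: "int k > 0" using k1 by simp
  have hS: "h (m, a) = h (m', b) \<longleftrightarrow> int k dvd (gg m - int a) - (gg m' - int b)"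
    if "m \<noteq> z" "m' \<noteq> z" for m m' a b
  proof -
    have "h (m, a) = h (m', b) \<longleftrightarrow> nat ((gg m - int a) mod int k) = nat ((gg m' - int b) mod int k)"
      using that unfolding h_def by simp
    also have "\<dots> \<longleftrightarrow> (gg m - int a) mod int k = (gg m' - int b) mod int k"
      using kpos by (metis nat_int_comparison(1) pos_mod_sign int_nat_eq)
    also have "\<dots> \<longleftrightarrow> int k dvd (gg m - int a) - (gg m' - int b)" by (rule mod_eq_dvd_iff)
    finally show ?thesis .
  qed
  show ?thesis
  proof (rule restr_iso_by_kernel[where h = h])
    fix m a m' b assume m: "m \<in> M" and m': "m' \<in> M"
    have lr: "(((m, a), m', b) \<in> loc_rel M T) = (\<exists>j. (T ^^ (j + b)) m = (T ^^ (j + a)) m')"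
      unfolding loc_rel_def using m m' by simp
    show "(((m, a), m', b) \<in> loc_rel M T) = (h (m, a) = h (m', b))"
    proof (cases "m = z")
      case True
      note mz = True
      show ?thesis
      proof (cases "m' = z")
        case True
        have "(T ^^ (0 + b)) m = (T ^^ (0 + a)) m'" using mz True tmod_powz[OF tm] by simp
        then have "\<exists>j. (T ^^ (j + b)) m = (T ^^ (j + a)) m'" by blast
        then show ?thesis unfolding lr using mz True unfolding h_def by simp
      next
        case False
        have "\<not> (\<exists>j. (T ^^ (j + b)) m = (T ^^ (j + a)) m')"
        proof
          assume "\<exists>j. (T ^^ (j + b)) m = (T ^^ (j + a)) m'"
          then obtain j where "(T ^^ (j + b)) m = (T ^^ (j + a)) m'" by blast
          then have "z = (T ^^ (j + a)) m'" using mz tmod_powz[OF tm] by simp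
          then show False using nz[OF m' False, of "j + a"] by simp
        qed
        then show ?thesis unfolding lr using mz False unfolding h_def by simp
      qed
    next
      case False
      note mnz = False
      show ?thesis
      proof (cases "m' = z")
        case True
        have "\<not> (\<exists>j. (T ^^ (j + b)) m = (T ^^ (j + a)) m')"
        proof
          assume "\<exists>j. (T ^^ (j + b)) m = (T ^^ (j + a)) m'"
          then obtain j where "(T ^^ (j + b)) m = (T ^^ (j + a)) m'" by blast
          then have "(T ^^ (j + b)) m = z" using True tmod_powz[OF tm] by simp
          then show False using nz[OF m mnz, of "j + b"] by simp
        qed
        then show ?thesis unfolding lr using mnz True unfolding h_def by simp
      next
        case False
        obtain p q where pq: "(T ^^ p) m = (T ^^ q) c" using reach m mnz by blast
        obtain p' q' where pq': "(T ^^ p') m' = (T ^^ q') c" using reach m' False by blast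
        have hh: "h (m, a) = h (m', b) \<longleftrightarrow> int k dvd (int q - int p - int a) - (int q' - int p' - int b)"
        proof -
          have d1: "int k dvd gg m - (int q - int p)" by (rule g_eq[OF pq])
          have d2: "int k dvd gg m' - (int q' - int p')" by (rule g_eq[OF pq'])
          have "(gg m - int a) - (gg m' - int b) = ((int q - int p - int a) - (int q' - int p' - int b))
                 + (gg m - (int q - int p)) - (gg m' - (int q' - int p'))" by simp
          then have "int k dvd (gg m - int a) - (gg m' - int b) \<longleftrightarrow> int k dvd (int q - int p - int a) - (int q' - int p' - int b)"
            using d1 d2 by (metis dvd_add_left_iff dvd_diff_commute dvd_diff add_diff_cancel diff_add_cancel)
          then show ?thesis using hS[OF mnz False] by simp
        qed
        have "(\<exists>j. (T ^^ (j + b)) m = (T ^^ (j + a)) m') \<longleftrightarrow> int k dvd (int q - int p - int a) - (int q' - int p' - int b)"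
        proof
          assume "\<exists>j. (T ^^ (j + b)) m = (T ^^ (j + a)) m'"
          then obtain j where j: "(T ^^ (j + b)) m = (T ^^ (j + a)) m'" by blast
          have "(T ^^ (p' + j + b)) ((T ^^ p) m) = (T ^^ (p + j + a)) ((T ^^ p') m')"
          proof -
            have "(T ^^ (p' + j + b)) ((T ^^ p) m) = (T ^^ (p + p')) ((T ^^ (j + b)) m)"
              by (simp add: fp_add ac_simps)
            also have "\<dots> = (T ^^ (p + p')) ((T ^^ (j + a)) m')" using j by simp
            also have "\<dots> = (T ^^ (p + j + a)) ((T ^^ p') m')"
              by (simp add: fp_add ac_simps)
            finally show ?thesis .
          qed
          then have "(T ^^ (p' + j + b)) ((T ^^ q) c) = (T ^^ (p + j + a)) ((T ^^ q') c)"
            using pq pq' by simp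
          then have "(T ^^ (p' + j + b + q)) c = (T ^^ (p + j + a + q')) c" by (simp add: fp_add)
          then have "int k dvd int (p' + j + b + q) - int (p + j + a + q')" using cyc modk by metis
          then show "int k dvd (int q - int p - int a) - (int q' - int p' - int b)"
            by (simp add: algebra_simps)
        next
          assume e: "int k dvd (int q - int p - int a) - (int q' - int p' - int b)"
          then have e': "int k dvd int (p' + b + q) - int (p + a + q')" by (simp add: algebra_simps)
          have "(T ^^ ((p + p') + b)) m = (T ^^ (p' + b)) ((T ^^ p) m)" by (simp add: fp_add ac_simps)
          also have "\<dots> = (T ^^ (p' + b + q)) c" using pq by (simp add: fp_add)
          also have "\<dots> = (T ^^ (p + a + q')) c" using e' cyc modk by metis
          also have "\<dots> = (T ^^ (p + a)) ((T ^^ p') m')" using pq' by (simp add: fp_add)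
          also have "\<dots> = (T ^^ ((p + p') + a)) m'" by (simp add: fp_add ac_simps)
          finally show "\<exists>j. (T ^^ (j + b)) m = (T ^^ (j + a)) m'" by blast
        qed
        then show ?thesis unfolding lr hh by simp
      qed
    qed
  next
    show "h ` (M \<times> UNIV) = C_carrier k"
    proof
      show "h ` (M \<times> UNIV) \<subseteq> C_carrier k"
      proof
        fix y assume "y \<in> h ` (M \<times> UNIV)"
        then obtain m a where y: "y = h (m, a)" by auto
        show "y \<in> C_carrier k"
        proof (cases "m = z")
          case True then show ?thesis using y unfolding h_def C_carrier_def by simp
        next
          case False
          have "nat ((gg m - int a) mod int k) < k" using kpos
            by (metis nat_less_iff pos_mod_bound pos_mod_sign)
          then show ?thesis using y False unfolding h_def C_carrier_def by simp
        qed
      qed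
      show "C_carrier k \<subseteq> h ` (M \<times> UNIV)"
      proof
        fix y assume y: "y \<in> C_carrier k"
        show "y \<in> h ` (M \<times> UNIV)"
        proof (cases y)
          case None
          have "h (z, 0) = y" using None unfolding h_def by simp
          then show ?thesis by (rule image_eqI[OF sym]) (simp add: zM)
        next
          case (Some i)
          then have ik: "i < k" using y unfolding C_carrier_def by auto
          have e0: "(T ^^ 0) ((T ^^ i) c) = (T ^^ i) c" by simp
          have d: "int k dvd gg ((T ^^ i) c) - int i" using g_eq[OF e0] by simp
          have "(gg ((T ^^ i) c) - int 0) mod int k = int i mod int k"
            using d by (simp add: mod_eq_dvd_iff)
          also have "\<dots> = int i" using ik by simp
          finally have "h ((T ^^ i) c, 0) = y" using Some nzc[of i] unfolding h_def by simp
          moreover have "(T ^^ i) c \<in> M" using tmod_pow[OF tm] cM by blast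
          ultimately show ?thesis by (intro image_eqI[OF sym]) auto
        qed
      qed
    qed
  next
    show "z \<in> M" by (rule zM)
    show "h (z, 0) = None" unfolding h_def by simp
    show "T m \<in> M" if "m \<in> M" for m using that tm by (auto simp: tmod_def)
  next
    fix m a assume m: "m \<in> M"
    show "h (T m, a) = C_act k (h (m, a))"
    proof (cases "m = z")
      case True then show ?thesis using Tz unfolding h_def C_act_def by simp
    next
      case False
      obtain p q where pq: "(T ^^ p) m = (T ^^ q) c" using reach m False by blast
      have "(T ^^ (p + 1)) m = (T ^^ (q + 1)) c" using shift[OF pq] .
      then have "(T ^^ p) (T m) = (T ^^ (q + 1)) c" by (simp add: funpow_Suc_right del: funpow.simps)
      then have d1: "int k dvd gg (T m) - (int (q + 1) - int p)" by (rule g_eq)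
      have d2: "int k dvd gg m - (int q - int p)" by (rule g_eq[OF pq])
      have Tmz: "T m \<noteq> z" using nz[OF m False, of 1] by simp
      define x where "x = (gg m - int a) mod int k"
      have x0: "0 \<le> x" unfolding x_def using kpos by simp
      have "int ((nat x + 1) mod k) = (x + 1) mod int k" using x0 by (simp add: zmod_int add.commute)
      also have "\<dots> = (gg m - int a + 1) mod int k" unfolding x_def by (simp add: mod_add_left_eq)
      also have "\<dots> = (gg (T m) - int a) mod int k"
      proof -
        have "int k dvd (gg m - int a + 1) - (gg (T m) - int a)"
        proof -
          have "(gg m - int a + 1) - (gg (T m) - int a) = (gg m - (int q - int p)) - (gg (T m) - (int (q + 1) - int p))"
            by simp
          then show ?thesis using d1 d2 by (metis dvd_diff)
        qed
        then show ?thesis by (simp add: mod_eq_dvd_iff)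
      qed
      finally have "(nat x + 1) mod k = nat ((gg (T m) - int a) mod int k)" by linarith
      then show ?thesis using Tmz False unfolding h_def C_act_def x_def by simp
    qed
  qed
qed


theorem mainTheorem11:
  fixes M :: "'a set" and z :: 'a and T :: "'a \<Rightarrow> 'a"
  assumes "tmod M z T" and "fin_gen M z T" and "indecomposable M z T"
  shows "(gamma_type1 M z T \<longrightarrow> restr_iso M z T {()} () id)
       \<and> (gamma_type2 M z T \<longrightarrow> restr_iso M z T L_carrier None L_act)
       \<and> (\<forall>k. gamma_type3 M z T k \<longrightarrow> restr_iso M z T (C_carrier k) None (C_act k))"
  using type1_case[OF assms(1)] type2_case[OF assms(1)] type3_case[OF assms(1)] by blast

end
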